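(* Let $\mathcal{S}\subseteq\mathcal{L}$ and $\phi\in\mathcal{L}$, let $\mathcal{AF}_{\vdash}=(\vdash,\overline{\cdot},\mathsf{id})$ be contrapositable with $\vdash$ satisfying Cut, and suppose that for every maximal $\mathcal{AF}_{\vdash}(\mathcal{S})$-consistent set $\Theta$ there is $\Theta'\subseteq\Theta$ with $\Theta'\vdash\phi$. Then the maximal $\mathcal{AF}_{\vdash}(\mathcal{S})$-consistent subsets of $\mathcal{S}$ are exactly the maximal $\mathcal{AF}_{\vdash^{+\phi}}(\mathcal{S})$-consistent subsets of $\mathcal{S}$.
   Context: $\mathcal{L}$ is a set of formulas; ${\vdash}\subseteq\wp_{\sf fin}(\mathcal{L})\times\mathcal{L}$ is arbitrary and $\overline{\cdot}:\mathcal{L}\to\wp(\mathcal{L})$. $\vdash^{+\phi}$ is the transitive closure of ${\vdash}\cup\{(\emptyset,\phi)\}$. Cut: for every $\phi$ and finite $\Gamma,\Delta$, if $\Gamma\vdash\phi$ and $\Delta\vdash^{+\phi}\gamma$ then $\Gamma\cup\Delta\vdash\gamma$. Contrapositable: for all finite $\Theta$, if $\Theta\vdash\gamma'$ with $\gamma'\in\overline{\gamma}$, then for every $\sigma\in\Theta$, $(\Theta\cup\{\gamma\})\setminus\{\sigma\}\vdash\sigma'$ for some $\sigma'\in\overline{\sigma}$. For a relation $\vdash'$ (here $\vdash$ or $\vdash^{+\phi}$), $\Theta\subseteq\mathcal{S}$ is $\mathcal{AF}_{\vdash'}(\mathcal{S})$-inconsistent iff there are $\Theta'\subseteq\Theta$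 and $\gamma\in\Theta'$ with $\Theta'\setminus\{\gamma\}\vdash'\gamma'$ for some $\gamma'\in\overline{\gamma}$, consistent otherwise; maximal consistent = consistent with no consistent proper superset within $\mathcal{S}$. *)

theory Defs
  imports Main
begin

text \<open>A derivability relation
  der :: 'a set => 'a => bool relates (finite) sets of premises to conclusions;
  ctr :: 'a => 'a set is the contrariness operator.\<close>

inductive derp :: "('a set \<Rightarrow> 'a \<Rightarrow> bool) \<Rightarrow> 'a \<Rightarrow> 'a set \<Rightarrow> 'a \<Rightarrow> bool"
  for der :: "'a set \<Rightarrow> 'a \<Rightarrow> bool" and \<phi> :: 'a where
  base: "der \<Gamma> \<gamma> \<Longrightarrow> derp der \<phi> \<Gamma> \<gamma>"
| ax: "derp der \<phi> {} \<phi>"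
| trans: "derp der \<phi> \<Gamma> \<psi> \<Longrightarrow> derp der \<phi> \<Delta> \<gamma> \<Longrightarrow> \<psi> \<in> \<Delta>
          \<Longrightarrow> derp der \<phi> (\<Gamma> \<union> (\<Delta> - {\<psi>})) \<gamma>"

definition fin_rel :: "('a set \<Rightarrow> 'a \<Rightarrow> bool) \<Rightarrow> bool" where
  "fin_rel der \<longleftrightarrow> (\<forall>\<Gamma> \<gamma>. der \<Gamma> \<gamma> \<longrightarrow> finite \<Gamma>)"

definition cut_prop :: "('a set \<Rightarrow> 'a \<Rightarrow> bool) \<Rightarrow> bool" where
  "cut_prop der \<longleftrightarrow> (\<forall>\<phi> \<Gamma> \<Delta> \<gamma>. finite \<Gamma> \<longrightarrow> finite \<Delta> \<longrightarrow>
      der \<Gamma> \<phi> \<longrightarrow> derp der \<phi> \<Delta> \<gamma> \<longrightarrow> der (\<Gamma> \<union> \<Delta>) \<gamma>)"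

definition contrapositable :: "('a set \<Rightarrow> 'a \<Rightarrow> bool) \<Rightarrow> ('a \<Rightarrow> 'a set) \<Rightarrow> bool" where
  "contrapositable der ctr \<longleftrightarrow> (\<forall>\<Theta> \<gamma> \<gamma>'. finite \<Theta> \<longrightarrow> der \<Theta> \<gamma>' \<longrightarrow> \<gamma>' \<in> ctr \<gamma> \<longrightarrow>
      (\<forall>\<sigma>\<in>\<Theta>. \<exists>\<sigma>'\<in>ctr \<sigma>. der ((\<Theta> \<union> {\<gamma>}) - {\<sigma>}) \<sigma>'))"

definition inconsistent :: "('a set \<Rightarrow> 'a \<Rightarrow> bool) \<Rightarrow> ('a \<Rightarrow> 'a set) \<Rightarrow> 'a set \<Rightarrow> bool" where
  "inconsistent R ctr \<Theta> \<longleftrightarrow>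
     (\<exists>\<Theta>'\<subseteq>\<Theta>. \<exists>\<gamma>\<in>\<Theta>'. \<exists>\<gamma>'\<in>ctr \<gamma>. R (\<Theta>' - {\<gamma>}) \<gamma>')"

definition consistent :: "('a set \<Rightarrow> 'a \<Rightarrow> bool) \<Rightarrow> ('a \<Rightarrow> 'a set) \<Rightarrow> 'a set \<Rightarrow> 'a set \<Rightarrow> bool" where
  "consistent R ctr S \<Theta> \<longleftrightarrow> \<Theta> \<subseteq> S \<and> \<not> inconsistent R ctr \<Theta>"

definition max_consistent :: "('a set \<Rightarrow> 'a \<Rightarrow> bool) \<Rightarrow> ('a \<Rightarrow> 'a set) \<Rightarrow> 'a set \<Rightarrow> 'a set \<Rightarrow> bool" where
  "max_consistent R ctr S \<Theta> \<longleftrightarrow> consistent R ctr S \<Theta> \<and>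
     (\<forall>\<Theta>'. \<Theta> \<subset> \<Theta>' \<longrightarrow> \<not> consistent R ctr S \<Theta>')"

end

theory Submission
  imports Defs
begin

lemma incI: "\<Theta>' \<subseteq> \<Theta> \<Longrightarrow> \<gamma> \<in> \<Theta>' \<Longrightarrow> \<gamma>' \<in> ctr \<gamma> \<Longrightarrow> R (\<Theta>' - {\<gamma>}) \<gamma>' \<Longrightarrow> inconsistent R ctr \<Theta>"
  unfolding inconsistent_def by (intro exI[where x="\<Theta>'"] conjI bexI[where x="\<gamma>"] bexI[where x="\<gamma>'"])

lemma incE: "inconsistent R ctr \<Theta> \<Longrightarrow> (\<And>\<Theta>' \<gamma> \<gamma>'. \<Theta>' \<subseteq> \<Theta> \<Longrightarrow> \<gamma> \<in> \<Theta>' \<Longrightarrow> \<gamma>' \<in> ctr \<gamma> \<Longrightarrow> R (\<Theta>' - {\<gamma>}) \<gamma>' \<Longrightarrow> P) \<Longrightarrow> P"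
  unfolding inconsistent_def by blast

lemma derp_finite:
  assumes "derp der \<phi> \<Gamma> \<gamma>" "fin_rel der" shows "finite \<Gamma>"
  using assms by (induction rule: derp.induct) (auto simp: fin_rel_def)

lemma incons_mono:
  "inconsistent der ctr \<Theta> \<Longrightarrow> inconsistent (derp der \<phi>) ctr \<Theta>"
proof -
  assume "inconsistent der ctr \<Theta>"
  then obtain \<Theta>' \<gamma> \<gamma>' where "\<Theta>' \<subseteq> \<Theta>" "\<gamma> \<in> \<Theta>'" "\<gamma>' \<in> ctr \<gamma>"
    "der (\<Theta>' - {\<gamma>}) \<gamma>'" by (rule incE)
  moreover from this(4) have "derp der \<phi> (\<Theta>' - {\<gamma>}) \<gamma>'" by (rule derp.base)
  ultimately show ?thesis by (metis incI)
qed

lemma cons_mono: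
  "consistent (derp der \<phi>) ctr S \<Theta> \<Longrightarrow> consistent der ctr S \<Theta>"
proof -
  assume a: "consistent (derp der \<phi>) ctr S \<Theta>"
  then have "\<Theta> \<subseteq> S" "\<not> inconsistent (derp der \<phi>) ctr \<Theta>" unfolding consistent_def by simp_all
  moreover have "\<not> inconsistent der ctr \<Theta>" using incons_mono[of der ctr \<Theta> \<phi>] calculation(2) by blast
  ultimately show ?thesis unfolding consistent_def by simp
qed

lemma max_cons_derp:
  assumes fin: "fin_rel der" and cp: "contrapositable der ctr" and cut: "cut_prop der"
    and mc: "max_consistent der ctr S \<Theta>" and ph: "\<exists>\<Theta>'\<subseteq>\<Theta>. der \<Theta>' \<phi>"
  shows "consistent (derp der \<phi>) ctr S \<Theta>"
proof -
  obtain \<Theta>0 where t0: "\<Theta>0 \<subseteq> \<Theta>" "der \<Theta>0 \<phi>" using ph by blast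
  have f0: "finite \<Theta>0" using t0 fin by (auto simp: fin_rel_def)
  have "\<not> inconsistent (derp der \<phi>) ctr \<Theta>"
  proof
    assume "inconsistent (derp der \<phi>) ctr \<Theta>"
    then obtain \<Theta>' \<gamma> \<gamma>' where w: "\<Theta>' \<subseteq> \<Theta>" "\<gamma> \<in> \<Theta>'" "\<gamma>' \<in> ctr \<gamma>"
      "derp der \<phi> (\<Theta>' - {\<gamma>}) \<gamma>'" by (rule incE)
    have f1: "finite (\<Theta>' - {\<gamma>})" using derp_finite[OF w(4) fin] .
    define \<Delta> where "\<Delta> = \<Theta>0 \<union> (\<Theta>' - {\<gamma>})"
    have d: "der \<Delta> \<gamma>'" unfolding \<Delta>_def using cut[unfolded cut_prop_def, rule_format, OF f0 f1 t0(2) w(4)] .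
    have fd: "finite \<Delta>" using f0 f1 \<Delta>_def by auto
    have "\<exists>\<gamma>''\<in>ctr \<gamma>. der ((\<Delta> \<union> {\<gamma>}) - {\<gamma>}) \<gamma>''"
    proof (cases "\<gamma> \<in> \<Delta>")
      case True
      show ?thesis using cp[unfolded contrapositable_def, rule_format, OF fd d w(3) True] .
    next
      case False
      then have "(\<Delta> \<union> {\<gamma>}) - {\<gamma>} = \<Delta>" by auto
      then show ?thesis using d w(3) by auto
    qed
    then obtain \<gamma>'' where g1: "\<gamma>'' \<in> ctr \<gamma>" and g2: "der ((\<Delta> \<union> {\<gamma>}) - {\<gamma>}) \<gamma>''" by blast
    have sub: "\<Delta> \<union> {\<gamma>} \<subseteq> \<Theta>" using t0 w unfolding \<Delta>_def by auto
    have "inconsistent der ctr \<Theta>" using incI[of "\<Delta> \<union> {\<gamma>}" \<Theta> \<gamma> \<gamma>'' ctr der] sub g1 g2 by simp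
    then show False using mc unfolding max_consistent_def consistent_def by simp
  qed
  then show ?thesis using mc unfolding max_consistent_def consistent_def by simp
qed

lemma extend:
  assumes fin: "fin_rel der" and c: "consistent der ctr S \<Theta>1"
  shows "\<exists>M. \<Theta>1 \<subseteq> M \<and> max_consistent der ctr S M"
proof -
  define A where "A = {X. \<Theta>1 \<subseteq> X \<and> consistent der ctr S X}"
  have "\<exists>M\<in>A. \<forall>X\<in>A. M \<subseteq> X \<longrightarrow> X = M"
  proof (rule subset_Zorn_nonempty)
    show "A \<noteq> {}" using c A_def by auto
  next
    fix C assume ne: "C \<noteq> {}" and ch: "subset.chain A C"
    have sub: "C \<subseteq> A" using ch by (auto simp: subset.chain_def)
    have "\<not> inconsistent der ctr (\<Union>C)"
    proof
      assume "inconsistent der ctr (\<Union>C)"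
      then obtain \<Theta>' \<gamma> \<gamma>' where w: "\<Theta>' \<subseteq> \<Union>C" "\<gamma> \<in> \<Theta>'" "\<gamma>' \<in> ctr \<gamma>"
        "der (\<Theta>' - {\<gamma>}) \<gamma>'" by (rule incE)
      have "finite \<Theta>'" proof -
        have "finite (\<Theta>' - {\<gamma>})" using w(4) fin unfolding fin_rel_def by blast
        then show ?thesis by simp
      qed
      then obtain B where "B \<in> C" "\<Theta>' \<subseteq> B" using finite_subset_Union_chain[OF _ w(1) ne ch] by blast
      then have "inconsistent der ctr B" using incI[of \<Theta>' B \<gamma> \<gamma>' ctr der] w by simp
      then show False using \<open>B \<in> C\<close> sub A_def consistent_def by blast
    qed
    moreover have "\<Union>C \<subseteq> S" using sub unfolding A_def consistent_def by blast
    moreover have "\<Theta>1 \<subseteq> \<Union>C" using sub ne unfolding A_def by blast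
    ultimately show "\<Union>C \<in> A" unfolding A_def consistent_def by blast
  qed
  then obtain M where M: "M \<in> A" "\<forall>X\<in>A. M \<subseteq> X \<longrightarrow> X = M" by blast
  have "max_consistent der ctr S M"
    unfolding max_consistent_def
  proof (intro conjI allI impI)
    show "consistent der ctr S M" using M A_def by auto
    fix X assume "M \<subset> X"
    show "\<not> consistent der ctr S X"
    proof
      assume "consistent der ctr S X"
      moreover have "\<Theta>1 \<subseteq> X" using M(1) \<open>M \<subset> X\<close> unfolding A_def by blast
      ultimately have "X \<in> A" unfolding A_def by blast
      then show False using M(2) \<open>M \<subset> X\<close> by blast
    qed
  qed
  then show ?thesis using M A_def by auto
qed

theorem lemma11:
  fixes der :: "'a set \<Rightarrow> 'a \<Rightarrow> bool" and ctr :: "'a \<Rightarrow> 'a set"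
    and S :: "'a set" and \<phi> :: 'a
  assumes "fin_rel der"
    and "contrapositable der ctr"
    and "cut_prop der"
    and "\<forall>\<Theta>. max_consistent der ctr S \<Theta> \<longrightarrow> (\<exists>\<Theta>'\<subseteq>\<Theta>. der \<Theta>' \<phi>)"
  shows "{\<Theta>. max_consistent der ctr S \<Theta>} = {\<Theta>. max_consistent (derp der \<phi>) ctr S \<Theta>}"
proof (intro set_eqI iffI)
  fix \<Theta> assume "\<Theta> \<in> {\<Theta>. max_consistent der ctr S \<Theta>}"
  then have mc: "max_consistent der ctr S \<Theta>" by simp
  have ph: "\<exists>\<Theta>'\<subseteq>\<Theta>. der \<Theta>' \<phi>" using assms(4) mc by blast
  have c: "consistent (derp der \<phi>) ctr S \<Theta>"
    using max_cons_derp[OF assms(1-3) mc ph] .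
  have m2: "\<forall>X. \<Theta> \<subset> X \<longrightarrow> \<not> consistent der ctr S X" using mc by (simp add: max_consistent_def)
  have "\<forall>X. \<Theta> \<subset> X \<longrightarrow> \<not> consistent (derp der \<phi>) ctr S X"
    using m2 cons_mono[of der \<phi> ctr S] by blast
  with c have "max_consistent (derp der \<phi>) ctr S \<Theta>" by (simp add: max_consistent_def)
  then show "\<Theta> \<in> {\<Theta>. max_consistent (derp der \<phi>) ctr S \<Theta>}" by simp
next
  fix \<Theta> assume "\<Theta> \<in> {\<Theta>. max_consistent (derp der \<phi>) ctr S \<Theta>}"
  then have mc: "max_consistent (derp der \<phi>) ctr S \<Theta>" by simp
  have c0: "consistent (derp der \<phi>) ctr S \<Theta>" using mc by (simp add: max_consistent_def)
  have c: "consistent der ctr S \<Theta>" using cons_mono[OF c0] .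
  have m2: "\<forall>X. \<Theta> \<subset> X \<longrightarrow> \<not> consistent (derp der \<phi>) ctr S X" using mc by (simp add: max_consistent_def)
  have "\<forall>X. \<Theta> \<subset> X \<longrightarrow> \<not> consistent der ctr S X"
  proof (intro allI impI notI)
    fix X assume lt: "\<Theta> \<subset> X" and cX: "consistent der ctr S X"
    obtain M where M: "X \<subseteq> M" "max_consistent der ctr S M" using extend[OF assms(1) cX] by blast
    have ph: "\<exists>\<Theta>'\<subseteq>M. der \<Theta>' \<phi>" using assms(4) M(2) by blast
    have "consistent (derp der \<phi>) ctr S M"
      using max_cons_derp[OF assms(1-3) M(2) ph] .
    moreover have "\<Theta> \<subset> M" using lt M by blast
    ultimately show False using m2 by blast
  qed
  with c have "max_consistent der ctr S \<Theta>" by (simp add: max_consistent_def)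
  then show "\<Theta> \<in> {\<Theta>. max_consistent der ctr S \<Theta>}" by simp
qed

end
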